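(* Let $\Sigma=\{\sigma_{\mathbf{a}|\mathbf{x}}\}$ be a no-signaling assemblage of operators acting on $\mathbb{C}^d$. If $\Sigma$ is on the edge of the set of no-signaling assemblages, then $$\sum_{\mathbf{a}|\mathbf{x}}\mathrm{rank}(\sigma_{\mathbf{a}|\mathbf{x}})\le\Big(\prod_{i=1}^n\mathcal{X}_i-1\Big)\Big(\prod_{i=1}^n\mathcal{A}_i\Big)d.$$
   Context: Fix $n\ge 1$, integers $\mathcal{A}_i,\mathcal{X}_i\ge 1$ and $d\ge1$; write $\mathbf{a}|\mathbf{x}=a_1\dots a_n|x_1\dots x_n$ with $a_i\in\{0,\dots,\mathcal{A}_i-1\}$, $x_i\in\{0,\dots,\mathcal{X}_i-1\}$; the sum runs over all such indices. A no-signaling assemblage is a collection of positive semidefinite operators $\sigma_{\mathbf{a}|\mathbf{x}}$ on $\mathbb{C}^d$ with $\sum_{\mathbf{a}}\sigma_{\mathbf{a}|\mathbf{x}}=\rho_B$ for all $\mathbf{x}$ ($\rho_B$ a fixed density operator) and such that for every $I=\{i_1,\dots,i_s\}\subset\{1,\dots,n\}$, $1\le s<n$, the sum $\sum_{a_j:\,j\notin I}\sigma_{\mathbf{a}|\mathbf{x}}$ depends only on $a_{i_k},x_{i_k}$. An LHS assemblage is one of the form $\sigma_{\mathbf{a}|\mathbf{x}}=\sum_j q_j\prod_i p^{(A_i)}_j(a_i|x_i)\rho_j$ with probability weights $q_j$, density operators $\rho_j$ and conditional distributions $p^{(A_i)}_j$. $\Sigma$ is on the edge if any decomposition $\Sigma=\epsilon\Sigma_1+(1-\epsilon)\Sigma_2$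 with $\epsilon\in[0,1]$, $\Sigma_1$ LHS and $\Sigma_2$ no-signaling forces $\epsilon=0$. *)

theory Defs
  imports "HOL-Analysis.Analysis"
begin

text \<open>Operators on C^d are represented as matrices of type complex^'d^'d, with d = CARD('d).
  Index tuples a = a_1 ... a_n are functions in PiE {..<n} (\<lambda>i. {..<A i}) (parties indexed 0..n-1).\<close>

definition psd :: "complex^'d^'d \<Rightarrow> bool" where
  "psd M \<longleftrightarrow> (\<forall>v :: complex^'d. (\<Sum>i\<in>UNIV. cnj (v $ i) * ((M *v v) $ i)) \<in> \<real> \<and>
                     0 \<le> Re (\<Sum>i\<in>UNIV. cnj (v $ i) * ((M *v v) $ i)))"

definition density :: "complex^'d^'d \<Rightarrow> bool" where
  "density M \<longleftrightarrow> psd M \<and> trace M = 1"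

definition tuples :: "nat \<Rightarrow> (nat \<Rightarrow> nat) \<Rightarrow> (nat \<Rightarrow> nat) set" where
  "tuples n K = PiE {..<n} (\<lambda>i. {..<K i})"

definition marginal :: "nat \<Rightarrow> (nat \<Rightarrow> nat) \<Rightarrow> nat set \<Rightarrow>
    ((nat \<Rightarrow> nat) \<Rightarrow> (nat \<Rightarrow> nat) \<Rightarrow> complex^'d^'d) \<Rightarrow> (nat \<Rightarrow> nat) \<Rightarrow> (nat \<Rightarrow> nat) \<Rightarrow> complex^'d^'d" where
  "marginal n A I \<sigma> a x = (\<Sum>b\<in>{b \<in> tuples n A. \<forall>i\<in>I. b i = a i}. \<sigma> b x)"

definition no_signaling ::
  "nat \<Rightarrow> (nat \<Rightarrow> nat) \<Rightarrow> (nat \<Rightarrow> nat) \<Rightarrow> ((nat \<Rightarrow> nat) \<Rightarrow> (nat \<Rightarrow> nat) \<Rightarrow> complex^'d^'d) \<Rightarrow> bool" where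
  "no_signaling n A X \<sigma> \<longleftrightarrow>
     (\<forall>a\<in>tuples n A. \<forall>x\<in>tuples n X. psd (\<sigma> a x)) \<and>
     (\<exists>\<rho>. density \<rho> \<and> (\<forall>x\<in>tuples n X. (\<Sum>a\<in>tuples n A. \<sigma> a x) = \<rho>)) \<and>
     (\<forall>I. I \<subseteq> {..<n} \<and> I \<noteq> {} \<and> I \<noteq> {..<n} \<longrightarrow>
        (\<forall>a\<in>tuples n A. \<forall>a'\<in>tuples n A. \<forall>x\<in>tuples n X. \<forall>x'\<in>tuples n X.
           (\<forall>i\<in>I. a i = a' i \<and> x i = x' i) \<longrightarrow>
           marginal n A I \<sigma> a x = marginal n A I \<sigma> a' x'))"

definition LHS ::
  "nat \<Rightarrow> (nat \<Rightarrow> nat) \<Rightarrow> (nat \<Rightarrow> nat) \<Rightarrow> ((nat \<Rightarrow> nat) \<Rightarrow> (nat \<Rightarrow> nat) \<Rightarrow> complex^'d^'d) \<Rightarrow> bool" where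
  "LHS n A X \<sigma> \<longleftrightarrow>
     (\<exists>(m::nat) (q::nat \<Rightarrow> real) (p::nat \<Rightarrow> nat \<Rightarrow> nat \<Rightarrow> nat \<Rightarrow> real) (\<rho>::nat \<Rightarrow> complex^'d^'d).
        (\<forall>j<m. 0 \<le> q j) \<and> (\<Sum>j<m. q j) = 1 \<and>
        (\<forall>j<m. density (\<rho> j)) \<and>
        (\<forall>j<m. \<forall>i<n. \<forall>xi<X i. (\<forall>ai<A i. 0 \<le> p j i ai xi) \<and> (\<Sum>ai<A i. p j i ai xi) = 1) \<and>
        (\<forall>a\<in>tuples n A. \<forall>x\<in>tuples n X.
           \<sigma> a x = (\<Sum>j<m. (q j * (\<Prod>i<n. p j i (a i) (x i))) *\<^sub>R \<rho> j)))"

definition on_edge ::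
  "nat \<Rightarrow> (nat \<Rightarrow> nat) \<Rightarrow> (nat \<Rightarrow> nat) \<Rightarrow> ((nat \<Rightarrow> nat) \<Rightarrow> (nat \<Rightarrow> nat) \<Rightarrow> complex^'d^'d) \<Rightarrow> bool" where
  "on_edge n A X \<sigma> \<longleftrightarrow>
     (\<forall>(\<epsilon>::real) \<sigma>1 \<sigma>2. 0 \<le> \<epsilon> \<and> \<epsilon> \<le> 1 \<and> LHS n A X \<sigma>1 \<and> no_signaling n A X \<sigma>2 \<and>
        (\<forall>a\<in>tuples n A. \<forall>x\<in>tuples n X. \<sigma> a x = \<epsilon> *\<^sub>R \<sigma>1 a x + (1 - \<epsilon>) *\<^sub>R \<sigma>2 a x)
        \<longrightarrow> \<epsilon> = 0)"

end

theory Submission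
  imports Defs
begin



definition ip :: "complex^'n \<Rightarrow> complex^'n \<Rightarrow> complex" where
  "ip u v = (\<Sum>i\<in>UNIV. cnj (u $ i) * v $ i)"

definition hf :: "complex^'n^'n \<Rightarrow> complex^'n \<Rightarrow> complex^'n \<Rightarrow> complex" where
  "hf M u w = ip u (M *v w)"

lemma psd_iff: "psd M \<longleftrightarrow> (\<forall>v. hf M v v \<in> \<real> \<and> 0 \<le> Re (hf M v v))"
  by (simp add: psd_def hf_def ip_def)

lemma ip_diff_left: "ip (x - y) z = ip x z - ip y z"
  by (simp add: ip_def algebra_simps sum_subtractf)
lemma ip_diff_right: "ip z (x - y) = ip z x - ip z y"
  by (simp add: ip_def algebra_simps sum_subtractf)
lemma ip_add_left: "ip (x + y) z = ip x z + ip y z"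
  by (simp add: ip_def algebra_simps sum.distrib)
lemma ip_add_right: "ip z (x + y) = ip z x + ip z y"
  by (simp add: ip_def algebra_simps sum.distrib)
lemma ip_scale_left: "ip (a *s x) y = cnj a * ip x y"
  by (simp add: ip_def sum_distrib_left mult.assoc)
lemma ip_scale_right: "ip x (a *s y) = a * ip x y"
  by (simp add: ip_def sum_distrib_left mult_ac)
lemma mv_scale: "(M::complex^'n^'n) *v (a *s x) = a *s (M *v x)"
  by (simp add: matrix_vector_mult_def vec_eq_iff sum_distrib_left mult_ac)

lemma hf_expand:
  "hf M (u - a *s w) (u - a *s w) = hf M u u - a * hf M u w - cnj a * hf M w u + cnj a * a * hf M w w"
  unfolding hf_def
  by (simp add: matrix_vector_mult_diff_distrib mv_scale ip_diff_left ip_diff_right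
      ip_scale_left ip_scale_right algebra_simps)

lemma psd_herm:
  assumes "psd M" shows "hf M u w = cnj (hf M w u)"
proof -
  have A: "hf M v v \<in> \<real>" for v using assms by (simp add: psd_iff)
  have 1: "Im (hf M (u - (-1) *s w) (u - (-1) *s w)) = 0" using A by (simp add: complex_is_Real_iff)
  have 2: "Im (hf M (u - (-\<i>) *s w) (u - (-\<i>) *s w)) = 0" using A by (simp add: complex_is_Real_iff)
  have 3: "Im (hf M u u) = 0" "Im (hf M w w) = 0" using A by (auto simp: complex_is_Real_iff)
  show ?thesis using 1 2 3 unfolding hf_expand
    by (simp add: complex_eq_iff)
qed

lemma hf_real: "psd M \<Longrightarrow> hf M v v = of_real (Re (hf M v v))"
  by (simp add: psd_iff complex_is_Real_iff complex_eq_iff)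

lemma ip_self_zero: "ip u u = 0 \<Longrightarrow> u = 0"
proof -
  assume h: "ip u u = 0"
  have e: "cnj z * z = of_real ((cmod z)^2)" for z
    unfolding cmod_power2
    by (simp add: complex_eq_iff cmod_power2 power2_eq_square)
  have "ip u u = of_real (\<Sum>i\<in>UNIV. (cmod (u $ i))^2)"
    unfolding ip_def e of_real_sum ..
  with h have "(\<Sum>i\<in>UNIV. (cmod (u $ i))^2) = 0" by (metis of_real_eq_0_iff)
  then have "\<forall>i\<in>UNIV. (cmod (u $ i))^2 = 0"
    by (subst (asm) sum_nonneg_eq_0_iff) auto
  then show "u = 0" by (simp add: vec_eq_iff)
qed

lemma psd_kernel:
  assumes "psd M" "Re (hf M w w) = 0" shows "M *v w = 0"
proof -
  define u where "u = M *v w"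
  define \<beta> where "\<beta> = hf M w u"
  have hww: "hf M w w = 0" using hf_real[OF assms(1), of w] assms(2) by simp
  have huw: "hf M u w = cnj \<beta>" using psd_herm[OF assms(1), of u w] \<beta>_def by simp
  have "\<beta> = 0"
  proof (rule ccontr)
    assume nz: "\<beta> \<noteq> 0"
    define t where "t = (Re (hf M u u) + 1) / (2 * (cmod \<beta>)^2)"
    have pos: "(cmod \<beta>)^2 > 0" using nz by simp
    have "hf M (u - (of_real t * \<beta>) *s w) (u - (of_real t * \<beta>) *s w)
          = hf M u u - of_real (2 * t * (cmod \<beta>)^2)"
    proof -
      have c: "cnj (of_real t * \<beta>) = of_real t * cnj \<beta>" by simp
      have "hf M (u - (of_real t * \<beta>) *s w) (u - (of_real t * \<beta>) *s w)
         = hf M u u - 2 * of_real t * (\<beta> * cnj \<beta>)"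
        unfolding hf_expand hww huw \<beta>_def[symmetric] c by (simp add: algebra_simps)
      also have "\<dots> = hf M u u - of_real (2 * t * (cmod \<beta>)^2)"
        by (simp add: complex_norm_square[symmetric])
      finally show ?thesis .
    qed
    moreover have "0 \<le> Re (hf M (u - (of_real t * \<beta>) *s w) (u - (of_real t * \<beta>) *s w))"
      using assms(1) by (simp add: psd_iff)
    ultimately have "0 \<le> Re (hf M u u) - 2 * t * (cmod \<beta>)^2" by simp
    moreover have "2 * t * (cmod \<beta>)^2 = Re (hf M u u) + 1" using pos by (simp add: t_def)
    ultimately show False by simp
  qed
  then have "ip u u = 0" using huw by (simp add: hf_def u_def)
  then show ?thesis using ip_self_zero u_def by simp
qed

lemma psd_CS:
  assumes "psd M" "Re (hf M w w) > 0"
  shows "(cmod (hf M u w))^2 \<le> Re (hf M u u) * Re (hf M w w)"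
proof -
  define s where "s = Re (hf M w w)"
  define \<beta> where "\<beta> = hf M w u"
  have hww: "hf M w w = of_real s" using hf_real[OF assms(1), of w] s_def by simp
  have huw: "hf M u w = cnj \<beta>" using psd_herm[OF assms(1), of u w] \<beta>_def by simp
  have sp: "s > 0" using assms(2) s_def by simp
  have "hf M (u - (\<beta> / of_real s) *s w) (u - (\<beta> / of_real s) *s w)
        = hf M u u - of_real ((cmod \<beta>)^2 / s)"
  proof -
    have sn: "(of_real s :: complex) \<noteq> 0" using sp by simp
    have c: "cnj (\<beta> / of_real s) = cnj \<beta> / of_real s" by simp
    have "hf M (u - (\<beta> / of_real s) *s w) (u - (\<beta> / of_real s) *s w)
       = hf M u u - 2 * (\<beta> * cnj \<beta>) / of_real s + (\<beta> * cnj \<beta>) * of_real s / (of_real s * of_real s)"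
      unfolding hf_expand hww huw \<beta>_def[symmetric] c by (simp add: algebra_simps)
    also have "(\<beta> * cnj \<beta>) * of_real s / (of_real s * of_real s) = (\<beta> * cnj \<beta>) / of_real s"
      using sn by simp
    also have "hf M u u - 2 * (\<beta> * cnj \<beta>) / of_real s + (\<beta> * cnj \<beta>) / of_real s
       = hf M u u - (\<beta> * cnj \<beta>) / of_real s" by (simp add: algebra_simps)
    also have "\<dots> = hf M u u - of_real ((cmod \<beta>)^2 / s)"
      by (simp add: complex_norm_square[symmetric])
    finally show ?thesis .
  qed
  moreover have "0 \<le> Re (hf M (u - (\<beta> / of_real s) *s w) (u - (\<beta> / of_real s) *s w))"
    using assms(1) by (simp add: psd_iff)
  ultimately have "(cmod \<beta>)^2 / s \<le> Re (hf M u u)" by simp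
  then have "(cmod \<beta>)^2 \<le> Re (hf M u u) * s" using sp by (simp add: field_simps)
  then show ?thesis using huw s_def by simp
qed


lemma hf_diff: "hf (A - B) u w = hf A u w - hf B u w"
  by (simp add: hf_def matrix_vector_mult_diff_rdistrib ip_diff_right)
lemma hf_add: "hf (A + B) u w = hf A u w + hf B u w"
  by (simp add: hf_def matrix_vector_mult_add_rdistrib ip_add_right)
lemma mv_scaleR: "((c::real) *\<^sub>R (A::complex^'n^'n)) *v w = (of_real c :: complex) *s (A *v w)"
proof -
  have "\<And>i j. ((c::real) *\<^sub>R (A::complex^'n^'n)) $ i $ j = of_real c * A $ i $ j"
    by (metis vector_scaleR_component scaleR_conv_of_real)
  then show ?thesis
    by (simp add: matrix_vector_mult_def vec_eq_iff sum_distrib_left mult.assoc)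
qed
lemma hf_scaleR: "hf ((c::real) *\<^sub>R A) u w = of_real c * hf A u w"
  by (simp add: hf_def mv_scaleR ip_scale_right)
lemma hf_zero: "hf 0 u w = 0"
  by (simp add: hf_def ip_def)

lemma psd_add: "psd A \<Longrightarrow> psd B \<Longrightarrow> psd (A + B)"
  by (simp add: psd_iff hf_add)
lemma psd_scaleR: "psd A \<Longrightarrow> (c::real) \<ge> 0 \<Longrightarrow> psd (c *\<^sub>R A)"
  by (simp add: psd_iff hf_scaleR complex_is_Real_iff)
lemma psd_zero: "psd 0"
  by (simp add: psd_iff hf_zero)
lemma psd_sum: "finite S \<Longrightarrow> (\<And>x. x \<in> S \<Longrightarrow> psd (f x)) \<Longrightarrow> psd (\<Sum>x\<in>S. f x)"
  by (induction S rule: finite_induct) (auto intro: psd_add psd_zero)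

lemma ip_self: "ip v v = of_real (\<Sum>i\<in>UNIV. (cmod (v $ i))^2)"
proof -
  have e: "cnj z * z = of_real ((cmod z)^2)" for z
    unfolding cmod_power2
    by (simp add: complex_eq_iff cmod_power2 power2_eq_square)
  show ?thesis unfolding ip_def e of_real_sum ..
qed

lemma ip_self_pos: "v \<noteq> 0 \<Longrightarrow> Re (ip v v) > 0"
proof -
  assume v: "v \<noteq> 0"
  have "Re (ip v v) \<ge> 0" unfolding ip_self by (simp add: sum_nonneg)
  moreover have "Re (ip v v) \<noteq> 0"
  proof
    assume "Re (ip v v) = 0"
    then have "ip v v = 0" unfolding ip_self by (metis Re_complex_of_real of_real_0)
    then show False using ip_self_zero v by blast
  qed
  ultimately show ?thesis by linarith
qed

definition proj :: "complex^'n \<Rightarrow> complex^'n^'n" where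
  "proj v = (\<chi> i j. v $ i * cnj (v $ j) / of_real (Re (ip v v)))"

lemma ip_swap: "ip v u = cnj (ip u v)"
  by (simp add: ip_def mult.commute)

lemma hf_proj: "hf (proj v) u u = of_real ((cmod (ip u v))^2 / Re (ip v v))"
proof -
  have "proj v *v u = (ip v u / of_real (Re (ip v v))) *s v"
    by (simp add: proj_def matrix_vector_mult_def vec_eq_iff ip_def sum_distrib_left sum_divide_distrib mult_ac)
  then have "hf (proj v) u u = ip u v * ip v u / of_real (Re (ip v v))"
    by (simp add: hf_def ip_scale_right mult_ac)
  also have "\<dots> = of_real ((cmod (ip u v))^2) / of_real (Re (ip v v))"
    unfolding ip_swap[of v u] complex_norm_square by simp
  finally show ?thesis by simp
qed

lemma proj_density: assumes "v \<noteq> 0" shows "density (proj v)"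
proof -
  have r: "Re (ip v v) > 0" using ip_self_pos[OF assms] .
  have "psd (proj v)" unfolding psd_iff hf_proj using r by simp
  moreover have "trace (proj v) = 1"
  proof -
    have "trace (proj v) = ip v v / of_real (Re (ip v v))"
      by (simp add: trace_def proj_def ip_def sum_divide_distrib mult.commute)
    also have "ip v v = of_real (Re (ip v v))" unfolding ip_self by simp
    finally show ?thesis using r by simp
  qed
  ultimately show ?thesis by (simp add: density_def)
qed

lemma psd_minus_proj:
  assumes M: "psd M" and w: "M *v w = v" and v: "v \<noteq> 0"
  shows "\<exists>c>0. psd (M - c *\<^sub>R proj v)"
proof -
  define s where "s = Re (hf M w w)"
  define r where "r = Re (ip v v)"
  have r0: "r > 0" using ip_self_pos[OF v] r_def by simp
  have "s \<ge> 0" using M s_def by (simp add: psd_iff)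
  moreover have "s \<noteq> 0" using psd_kernel[OF M] w v s_def by auto
  ultimately have s0: "s > 0" by simp
  define c where "c = r / s"
  have "psd (M - c *\<^sub>R proj v)"
    unfolding psd_iff
  proof
    fix u
    have e: "hf (M - c *\<^sub>R proj v) u u = hf M u u - of_real (c * ((cmod (ip u v))^2 / r))"
      by (simp add: hf_diff hf_scaleR hf_proj r_def)
    have cs: "(cmod (hf M u w))^2 \<le> Re (hf M u u) * s"
      using psd_CS[OF M] s0 s_def by simp
    have iuv: "ip u v = hf M u w" using w by (simp add: hf_def)
    have "c * ((cmod (ip u v))^2 / r) = (cmod (hf M u w))^2 / s"
      using r0 s0 iuv by (simp add: c_def)
    also have "\<dots> \<le> Re (hf M u u)" using cs s0 by (simp add: divide_le_eq)
    finally have le: "c * ((cmod (ip u v))^2 / r) \<le> Re (hf M u u)" .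
    have "hf M u u \<in> \<real>" using M by (simp add: psd_iff)
    then show "hf (M - c *\<^sub>R proj v) u u \<in> \<real> \<and> 0 \<le> Re (hf (M - c *\<^sub>R proj v) u u)"
      unfolding e using le by auto
  qed
  moreover have "c > 0" using r0 s0 c_def by simp
  ultimately show ?thesis by blast
qed


lemma hf_axis: "hf (M::complex^'n^'n) (axis i 1) (axis j 1) = M $ i $ j"
proof -
  have "ip (axis i 1) y = y $ i" for y :: "complex^'n"
    proof -
    have "\<And>k. cnj (axis i 1 $ k) * y $ k = (if k = i then y $ k else 0)"
      by (simp add: axis_def)
    then show ?thesis unfolding ip_def by simp
  qed
  moreover have "(M *v axis j 1) $ i = M $ i $ j"
    proof -
    have "\<And>k. M $ i $ k * axis j 1 $ k = (if k = j then M $ i $ j else 0)"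
      by (simp add: axis_def)
    then show ?thesis unfolding matrix_vector_mult_def by simp
  qed
  ultimately show ?thesis by (simp add: hf_def)
qed

lemma psd_entry: "psd M \<Longrightarrow> M $ i $ j = cnj (M $ j $ i)"
  using psd_herm[of M "axis i 1" "axis j 1"] by (simp add: hf_axis)

definition vcnj :: "complex^'n \<Rightarrow> complex^'n" where
  "vcnj u = (\<chi> i. cnj (u $ i))"

lemma span_rows_range:
  assumes M: "psd (M::complex^'n^'n)" and u: "u \<in> vec.span (rows M)"
  shows "\<exists>w. M *v w = vcnj u"
proof -
  have "vec.subspace {u. \<exists>w. M *v w = vcnj u}"
    unfolding vec.subspace_def
  proof (intro conjI ballI allI)
    show "0 \<in> {u. \<exists>w. M *v w = vcnj u}"
      by (rule CollectI, rule exI[of _ 0]) (simp add: vcnj_def vec_eq_iff)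
  next
    fix x y assume "x \<in> {u. \<exists>w. M *v w = vcnj u}" "y \<in> {u. \<exists>w. M *v w = vcnj u}"
    then obtain wx wy where "M *v wx = vcnj x" "M *v wy = vcnj y" by auto
    then have "M *v (wx + wy) = vcnj (x + y)"
      by (simp add: matrix_vector_right_distrib vcnj_def vec_eq_iff)
    then show "x + y \<in> {u. \<exists>w. M *v w = vcnj u}" by blast
  next
    fix c x assume "x \<in> {u. \<exists>w. M *v w = vcnj u}"
    then obtain wx where "M *v wx = vcnj x" by auto
    then have "M *v (cnj c *s wx) = vcnj (c *s x)"
      by (simp add: mv_scale vcnj_def vec_eq_iff)
    then show "c *s x \<in> {u. \<exists>w. M *v w = vcnj u}" by blast
  qed
  moreover have "\<forall>x\<in>rows M. \<exists>w. M *v w = vcnj x"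
  proof
    fix x assume "x \<in> rows M"
    then obtain i where xi: "x = row i M" by (auto simp: rows_def)
    have "(M *v axis i 1) $ k = M $ k $ i" for k
    proof -
      have "\<And>l. M $ k $ l * axis i 1 $ l = (if l = i then M $ k $ i else 0)"
        by (simp add: axis_def)
      then show ?thesis unfolding matrix_vector_mult_def by simp
    qed
    moreover have "vcnj x $ k = cnj (M $ i $ k)" for k by (simp add: vcnj_def xi row_def)
    ultimately have "(M *v axis i 1) $ k = vcnj x $ k" for k
      using psd_entry[OF M, of k i] by metis
    then have "M *v axis i 1 = vcnj x" by (simp add: vec_eq_iff)
    then show "\<exists>w. M *v w = vcnj x" by blast
  qed
  ultimately show ?thesis using vec.span_induct[OF u, of "\<lambda>u. \<exists>w. M *v w = vcnj u"] by auto
qed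

lemma vcnj_nz: "u \<noteq> 0 \<Longrightarrow> vcnj u \<noteq> 0"
  by (simp add: vcnj_def vec_eq_iff)

lemma dim_Inter:
  fixes S :: "'x \<Rightarrow> (complex^'n) set"
  assumes "finite T" "\<And>x. x \<in> T \<Longrightarrow> vec.subspace (S x)"
  shows "int (vec.dim (\<Inter>x\<in>T. S x)) \<ge> int CARD('n) - (\<Sum>x\<in>T. (int CARD('n) - int (vec.dim (S x))))"
  using assms
proof (induction T rule: finite_induct)
  case empty
  then show ?case by (simp add: vec_dim_card card_cart_basis)
next
  case (insert x T)
  let ?I = "\<Inter>x\<in>T. S x"
  have sI: "vec.subspace ?I" by (rule vec.subspace_Int) (use insert.prems in auto)
  have sx: "vec.subspace (S x)" using insert.prems by simp
  have e: "vec.dim {a + b |a b. a \<in> S x \<and> b \<in> ?I} + vec.dim (S x \<inter> ?I) = vec.dim (S x) + vec.dim ?I"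
    by (rule vec.dim_sums_Int[OF sx sI])
  have le: "vec.dim {a + b |a b. a \<in> S x \<and> b \<in> ?I} \<le> CARD('n)"
  proof -
    have "vec.dim {a + b |a b. a \<in> S x \<and> b \<in> ?I} \<le> vec.dim (UNIV :: (complex^'n) set)"
      by (rule vec.dim_subset) simp
    then show ?thesis by (simp only: vec_dim_card)
  qed
  have IH: "int (vec.dim ?I) \<ge> int CARD('n) - (\<Sum>x\<in>T. (int CARD('n) - int (vec.dim (S x))))"
    using insert.IH insert.prems by blast
  have i1: "(\<Inter>y\<in>insert x T. S y) = S x \<inter> ?I" by simp
  have s1: "(\<Sum>y\<in>insert x T. (int CARD('n) - int (vec.dim (S y))))
     = (int CARD('n) - int (vec.dim (S x))) + (\<Sum>y\<in>T. (int CARD('n) - int (vec.dim (S y))))"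
    using insert(1,2) by (rule sum.insert)
  have "int (vec.dim (S x \<inter> ?I)) \<ge> int (vec.dim (S x)) + int (vec.dim ?I) - int CARD('n)"
    using e le by linarith
  then show ?case unfolding i1 s1 using IH by linarith
qed



definition strat :: "nat \<Rightarrow> (nat \<Rightarrow> nat) \<Rightarrow> (nat \<Rightarrow> nat) \<Rightarrow> (nat \<Rightarrow> nat \<Rightarrow> nat) set" where
  "strat n A X = PiE {..<n} (\<lambda>i. PiE {..<X i} (\<lambda>_. {..<A i}))"

definition fg :: "nat \<Rightarrow> (nat \<Rightarrow> nat \<Rightarrow> nat) \<Rightarrow> (nat \<Rightarrow> nat) \<Rightarrow> (nat \<Rightarrow> nat)" where
  "fg n g x = restrict (\<lambda>i. g i (x i)) {..<n}"

definition tr :: "nat \<Rightarrow> nat \<Rightarrow> nat \<Rightarrow> nat" where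
  "tr p q v = (if v = p then q else if v = q then p else v)"

definition sw :: "nat \<Rightarrow> (nat \<Rightarrow> nat) \<Rightarrow> (nat \<Rightarrow> nat) \<Rightarrow> (nat \<Rightarrow> nat) \<Rightarrow> (nat \<Rightarrow> nat \<Rightarrow> nat) \<Rightarrow> (nat \<Rightarrow> nat \<Rightarrow> nat)" where
  "sw n x a a' g = (\<lambda>i j. if i < n \<and> j = x i then tr (a i) (a' i) (g i j) else g i j)"

lemma tr_sym: "tr p q = tr q p"
  by (auto simp: tr_def fun_eq_iff)

lemma tr_tr: "tr p q (tr p q v) = v"
  by (auto simp: tr_def)

lemma sw_sym: "sw n x a a' = sw n x a' a"
proof -
  have "\<forall>i. tr (a i) (a' i) = tr (a' i) (a i)" using tr_sym by blast
  then show ?thesis by (intro ext) (simp add: sw_def)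
qed

lemma sw_sw: "sw n x a a' (sw n x a a' g) = g"
  by (auto simp: sw_def tr_tr fun_eq_iff)

lemma fg_mem: "g \<in> strat n A X \<Longrightarrow> x \<in> tuples n X \<Longrightarrow> fg n g x \<in> tuples n A"
  by (auto simp: strat_def tuples_def fg_def PiE_iff)

lemma fg_eq: "a \<in> tuples n A \<Longrightarrow> fg n g x = a \<longleftrightarrow> (\<forall>i<n. g i (x i) = a i)"
  by (auto simp: fg_def tuples_def PiE_iff fun_eq_iff extensional_def)

lemma sw_fiber:
  assumes x: "x \<in> tuples n X" and a: "a \<in> tuples n A" and a': "a' \<in> tuples n A"
    and g: "g \<in> {g \<in> strat n A X. fg n g x = a}"
  shows "sw n x a a' g \<in> {g \<in> strat n A X. fg n g x = a'}"
proof -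
  have gS: "g \<in> strat n A X" and ga: "\<forall>i<n. g i (x i) = a i" using g fg_eq[OF a] by auto
  have 1: "\<forall>i\<in>{..<n}. sw n x a a' g i \<in> PiE {..<X i} (\<lambda>_. {..<A i})"
  proof
    fix i assume i: "i \<in> {..<n}"
    have gi: "g i \<in> PiE {..<X i} (\<lambda>_. {..<A i})" using gS i unfolding strat_def by (rule PiE_mem)
    have xi: "x i < X i" using PiE_mem[OF x[unfolded tuples_def] i] by simp
    have ai: "a i < A i" using PiE_mem[OF a[unfolded tuples_def] i] by simp
    have a'i: "a' i < A i" using PiE_mem[OF a'[unfolded tuples_def] i] by simp
    have e: "sw n x a a' g i = (\<lambda>j. if j = x i then tr (a i) (a' i) (g i j) else g i j)"
      using i by (simp add: sw_def)
    have r: "\<forall>j\<in>{..<X i}. sw n x a a' g i j \<in> {..<A i}"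
    proof
      fix j assume j: "j \<in> {..<X i}"
      have "g i j < A i" using PiE_mem[OF gi j] by simp
      then show "sw n x a a' g i j \<in> {..<A i}" unfolding e using ai a'i by (cases "j = x i") (simp_all add: tr_def)
    qed
    have ex: "sw n x a a' g i \<in> extensional {..<X i}"
    proof -
      have "g i \<in> extensional {..<X i}" using gi by (simp add: PiE_iff)
      then have u: "\<And>j. j \<notin> {..<X i} \<Longrightarrow> g i j = undefined" by (simp add: extensional_def)
      show ?thesis unfolding extensional_def
      proof (intro CollectI allI impI)
        fix j assume j: "j \<notin> {..<X i}"
        then have "j \<noteq> x i" using xi by auto
        then show "sw n x a a' g i j = undefined" unfolding e using u[OF j] by simp
      qed
    qed
    show "sw n x a a' g i \<in> PiE {..<X i} (\<lambda>_. {..<A i})"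
      by (subst PiE_iff) (use r ex in blast)
  qed
  have 2: "sw n x a a' g \<in> extensional {..<n}"
  proof -
    have "g \<in> extensional {..<n}" using gS unfolding strat_def by (simp add: PiE_iff)
    then have u: "\<And>i. i \<notin> {..<n} \<Longrightarrow> g i = undefined" by (simp add: extensional_def)
    show ?thesis unfolding extensional_def
    proof (intro CollectI allI impI)
      fix i assume i: "i \<notin> {..<n}"
      have "sw n x a a' g i = g i" using i by (simp add: sw_def fun_eq_iff)
      then show "sw n x a a' g i = undefined" using u[OF i] by simp
    qed
  qed
  have "sw n x a a' g \<in> strat n A X"
    unfolding strat_def by (subst PiE_iff) (use 1 2 in blast)
  moreover have "\<forall>i<n. sw n x a a' g i (x i) = a' i"
    using ga by (simp add: sw_def tr_def)
  ultimately show ?thesis using fg_eq[OF a'] by auto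
qed

lemma fiber_card:
  assumes x: "x \<in> tuples n X" and a: "a \<in> tuples n A" and a': "a' \<in> tuples n A"
  shows "card {g \<in> strat n A X. fg n g x = a} = card {g \<in> strat n A X. fg n g x = a'}"
proof (rule bij_betw_same_card[of "sw n x a a'"])
  show "bij_betw (sw n x a a') {g \<in> strat n A X. fg n g x = a} {g \<in> strat n A X. fg n g x = a'}"
  proof (rule bij_betw_byWitness[where f'="sw n x a a'"])
    show "\<forall>g\<in>{g \<in> strat n A X. fg n g x = a}. sw n x a a' (sw n x a a' g) = g" by (simp add: sw_sw)
    show "\<forall>g\<in>{g \<in> strat n A X. fg n g x = a'}. sw n x a a' (sw n x a a' g) = g" by (simp add: sw_sw)
    show "sw n x a a' ` {g \<in> strat n A X. fg n g x = a} \<subseteq> {g \<in> strat n A X. fg n g x = a'}"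
      using sw_fiber[OF x a a'] by blast
    show "sw n x a a' ` {g \<in> strat n A X. fg n g x = a'} \<subseteq> {g \<in> strat n A X. fg n g x = a}"
      using sw_fiber[OF x a' a] sw_sym[of n x a a'] by auto
  qed
qed

lemma finite_strat: "finite (strat n A X)"
  by (simp add: strat_def finite_PiE)

lemma finite_tuples: "finite (tuples n A)"
  by (simp add: tuples_def finite_PiE)

lemma card_tuples: "card (tuples n A) = (\<Prod>i<n. A i)"
  by (simp add: tuples_def card_PiE)

lemma tuples_ne: "\<forall>i<n. A i \<ge> 1 \<Longrightarrow> tuples n A \<noteq> {}"
proof -
  assume h: "\<forall>i<n. A i \<ge> 1"
  have "(\<lambda>i\<in>{..<n}. 0) \<in> tuples n A" unfolding tuples_def
    using h by (auto simp: PiE_iff)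
  then show ?thesis by blast
qed

lemma strat_ne: "\<forall>i<n. A i \<ge> 1 \<Longrightarrow> strat n A X \<noteq> {}"
proof -
  assume h: "\<forall>i<n. A i \<ge> 1"
  have "(\<lambda>i\<in>{..<n}. \<lambda>j\<in>{..<X i}. 0) \<in> strat n A X" unfolding strat_def
    using h by (auto simp: PiE_iff)
  then show ?thesis by blast
qed

lemma avg_one:
  assumes x: "x \<in> tuples n X" and An: "\<forall>i<n. A i \<ge> 1"
  shows "card (tuples n A) * (\<Sum>g\<in>strat n A X. c (fg n g x) :: nat)
       = card (strat n A X) * (\<Sum>a\<in>tuples n A. c a)"
proof -
  obtain a0 where a0: "a0 \<in> tuples n A" using tuples_ne[OF An] by blast
  define K where "K = card {g \<in> strat n A X. fg n g x = a0}"
  have fK: "card {g \<in> strat n A X. fg n g x = a} = K" if "a \<in> tuples n A" for a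
    using fiber_card[OF x that a0] K_def by simp
  have im: "(\<lambda>g. fg n g x) ` strat n A X \<subseteq> tuples n A" using fg_mem x by blast
  have "(\<Sum>g\<in>strat n A X. c (fg n g x)) = (\<Sum>a\<in>tuples n A. \<Sum>g\<in>{g \<in> strat n A X. fg n g x = a}. c (fg n g x))"
    by (rule sum.group[OF finite_strat finite_tuples im, symmetric])
  also have "\<dots> = (\<Sum>a\<in>tuples n A. K * c a)"
    by (rule sum.cong) (auto simp: fK)
  finally have 1: "(\<Sum>g\<in>strat n A X. c (fg n g x)) = K * (\<Sum>a\<in>tuples n A. c a)"
    by (simp add: sum_distrib_left)
  have "card (strat n A X) = (\<Sum>g\<in>strat n A X. 1)" by simp
  also have "\<dots> = (\<Sum>a\<in>tuples n A. \<Sum>g\<in>{g \<in> strat n A X. fg n g x = a}. 1)"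
    by (rule sum.group[OF finite_strat finite_tuples im, symmetric])
  also have "\<dots> = (\<Sum>a\<in>tuples n A. K)"
    by (rule sum.cong) (auto simp: fK)
  finally have 2: "card (strat n A X) = card (tuples n A) * K" by simp
  show ?thesis using 1 2 by simp
qed

lemma avg:
  fixes c :: "(nat \<Rightarrow> nat) \<Rightarrow> (nat \<Rightarrow> nat) \<Rightarrow> nat"
  assumes An: "\<forall>i<n. A i \<ge> 1"
    and lt: "(\<Sum>x\<in>tuples n X. \<Sum>a\<in>tuples n A. c a x) < card (tuples n A) * D"
  shows "\<exists>g\<in>strat n A X. (\<Sum>x\<in>tuples n X. c (fg n g x) x) < D"
proof (rule ccontr)
  assume "\<not> ?thesis"
  then have ge: "\<forall>g\<in>strat n A X. D \<le> (\<Sum>x\<in>tuples n X. c (fg n g x) x)" by auto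
  have "card (strat n A X) * D \<le> (\<Sum>g\<in>strat n A X. \<Sum>x\<in>tuples n X. c (fg n g x) x)"
    using sum_mono[of "strat n A X" "\<lambda>_. D"] ge by simp
  also have "\<dots> = (\<Sum>x\<in>tuples n X. \<Sum>g\<in>strat n A X. c (fg n g x) x)" by (rule sum.swap)
  finally have "card (tuples n A) * (card (strat n A X) * D)
      \<le> card (tuples n A) * (\<Sum>x\<in>tuples n X. (\<Sum>g\<in>strat n A X. c (fg n g x) x))"
    by (rule mult_le_mono2)
  also have "\<dots> = (\<Sum>x\<in>tuples n X. card (tuples n A) * (\<Sum>g\<in>strat n A X. c (fg n g x) x))"
    by (rule sum_distrib_left)
  also have "\<dots> = (\<Sum>x\<in>tuples n X. card (strat n A X) * (\<Sum>a\<in>tuples n A. c a x))"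
    by (rule sum.cong) (auto intro: avg_one[OF _ An])
  also have "\<dots> = card (strat n A X) * (\<Sum>x\<in>tuples n X. \<Sum>a\<in>tuples n A. c a x)"
    by (simp add: sum_distrib_left)
  finally have le: "card (tuples n A) * (card (strat n A X) * D)
      \<le> card (strat n A X) * (\<Sum>x\<in>tuples n X. \<Sum>a\<in>tuples n A. c a x)" .
  have pos: "card (strat n A X) > 0"
    using strat_ne[OF An] finite_strat card_gt_0_iff by blast
  have "card (strat n A X) * (\<Sum>x\<in>tuples n X. \<Sum>a\<in>tuples n A. c a x)
      < card (strat n A X) * (card (tuples n A) * D)"
    using lt pos by simp
  with le show False by (simp add: mult_ac)
qed




lemma prod_ind: "(\<Prod>i<(n::nat). (if P i then 1 else 0 :: real)) = (if \<forall>i<n. P i then 1 else 0)"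
  by (induction n) (auto simp: less_Suc_eq)

lemma trace_scaleR: "trace ((c::real) *\<^sub>R (M::complex^'n^'n)) = of_real c * trace M"
proof -
  have "\<And>i j. ((c::real) *\<^sub>R (M::complex^'n^'n)) $ i $ j = of_real c * M $ i $ j"
    by (metis vector_scaleR_component scaleR_conv_of_real)
  then show ?thesis by (simp add: trace_def sum_distrib_left)
qed

lemma rank_le: "rank (M::complex^'d^'d) \<le> CARD('d)"
proof -
  have "vec.dim (rows M) \<le> vec.dim (UNIV :: (complex^'d) set)" by (rule vec.dim_subset) simp
  then show ?thesis unfolding row_rank_def_gen by (simp only: vec_dim_card)
qed

theorem corollary1:
  fixes n :: nat and A X :: "nat \<Rightarrow> nat"
    and \<sigma> :: "(nat \<Rightarrow> nat) \<Rightarrow> (nat \<Rightarrow> nat) \<Rightarrow> complex^'d^'d"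
  assumes "n \<ge> 1"
    and "\<forall>i<n. A i \<ge> 1" and "\<forall>i<n. X i \<ge> 1"
    and "no_signaling n A X \<sigma>"
    and "on_edge n A X \<sigma>"
  shows "(\<Sum>a\<in>tuples n A. \<Sum>x\<in>tuples n X. rank (\<sigma> a x))
           \<le> ((\<Prod>i<n. X i) - 1) * (\<Prod>i<n. A i) * CARD('d)"
proof (rule ccontr)
  assume neg: "\<not> ?thesis"
  note An = assms(2) and Xn = assms(3)
  define d where "d = CARD('d)"
  define TA where "TA = tuples n A"
  define TX where "TX = tuples n X"
  have psd\<sigma>: "\<And>a x. a \<in> TA \<Longrightarrow> x \<in> TX \<Longrightarrow> psd (\<sigma> a x)"
    using assms(4) by (simp add: no_signaling_def TA_def TX_def)
  obtain \<rho>B where \<rho>B: "density \<rho>B" and sum\<sigma>: "\<And>x. x \<in> TX \<Longrightarrow> (\<Sum>a\<in>TA. \<sigma> a x) = \<rho>B"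
    using assms(4) by (auto simp: no_signaling_def TA_def TX_def)
  have marg\<sigma>: "\<And>I a a' x x'. I \<subseteq> {..<n} \<Longrightarrow> I \<noteq> {} \<Longrightarrow> I \<noteq> {..<n} \<Longrightarrow> a \<in> TA \<Longrightarrow> a' \<in> TA
      \<Longrightarrow> x \<in> TX \<Longrightarrow> x' \<in> TX \<Longrightarrow> (\<forall>i\<in>I. a i = a' i \<and> x i = x' i) \<Longrightarrow>
      marginal n A I \<sigma> a x = marginal n A I \<sigma> a' x'"
    using assms(4) unfolding no_signaling_def TA_def TX_def by blast
  define c where "c a x = d - rank (\<sigma> a x)" for a x
  have fTA: "finite TA" and fTX: "finite TX" by (simp_all add: TA_def TX_def finite_tuples)
  have cTA: "card TA = (\<Prod>i<n. A i)" and cTX: "card TX = (\<Prod>i<n. X i)"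
    by (simp_all add: TA_def TX_def card_tuples)
  have rk: "rank (\<sigma> a x) \<le> d" for a x unfolding d_def by (rule rank_le)
  have C: "(\<Sum>x\<in>TX. \<Sum>a\<in>TA. c a x) < card TA * d"
  proof -
    have e1: "(\<Sum>x\<in>TX. \<Sum>a\<in>TA. c a x) + (\<Sum>a\<in>TA. \<Sum>x\<in>TX. rank (\<sigma> a x)) = card TX * card TA * d"
    proof -
      have "(\<Sum>a\<in>TA. \<Sum>x\<in>TX. rank (\<sigma> a x)) = (\<Sum>x\<in>TX. \<Sum>a\<in>TA. rank (\<sigma> a x))"
        by (rule sum.swap)
      then have "(\<Sum>x\<in>TX. \<Sum>a\<in>TA. c a x) + (\<Sum>a\<in>TA. \<Sum>x\<in>TX. rank (\<sigma> a x))
          = (\<Sum>x\<in>TX. \<Sum>a\<in>TA. (c a x + rank (\<sigma> a x)))"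
        by (simp add: sum.distrib)
      also have "\<dots> = (\<Sum>x\<in>TX. \<Sum>a\<in>TA. d)"
        using rk by (simp add: c_def)
      finally show ?thesis by simp
    qed
    have P1: "card TX \<ge> 1"
      using fTX tuples_ne[OF Xn] by (simp add: TX_def Suc_le_eq card_gt_0_iff)
    then obtain P' where P': "card TX = Suc P'" by (cases "card TX") auto
    have e2: "(card TX - 1) * card TA * d + card TA * d = card TX * card TA * d"
      using P' by (simp add: algebra_simps)
    have "(\<Sum>a\<in>TA. \<Sum>x\<in>TX. rank (\<sigma> a x)) > (card TX - 1) * card TA * d"
      using neg unfolding cTA cTX unfolding TA_def TX_def d_def by simp
    then show ?thesis using e1 e2 by linarith
  qed
  obtain g where gS: "g \<in> strat n A X" and gd: "(\<Sum>x\<in>TX. c (fg n g x) x) < d"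
    using avg[OF An C[unfolded TA_def TX_def]] TX_def by blast
  have fgm: "\<And>x. x \<in> TX \<Longrightarrow> fg n g x \<in> TA" using fg_mem[OF gS] by (simp add: TA_def TX_def)
  define S where "S x = vec.span (rows (\<sigma> (fg n g x) x))" for x
  have dimS: "vec.dim (S x) = rank (\<sigma> (fg n g x) x)" for x
    by (simp add: S_def row_rank_def_gen)
  have "int (vec.dim (\<Inter>x\<in>TX. S x)) \<ge> int CARD('d) - (\<Sum>x\<in>TX. (int CARD('d) - int (vec.dim (S x))))"
    by (rule dim_Inter[OF fTX]) (simp add: S_def)
  also have "(\<Sum>x\<in>TX. (int CARD('d) - int (vec.dim (S x)))) = int (\<Sum>x\<in>TX. c (fg n g x) x)"
    unfolding of_nat_sum by (rule sum.cong) (use rk in \<open>auto simp: dimS c_def d_def of_nat_diff\<close>)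
  finally have "int (vec.dim (\<Inter>x\<in>TX. S x)) > 0" using gd d_def by linarith
  then have "\<not> (\<Inter>x\<in>TX. S x) \<subseteq> {0}" using vec.dim_eq_0 by (metis of_nat_0 order_less_irrefl)
  then obtain u where uS: "\<And>x. x \<in> TX \<Longrightarrow> u \<in> S x" and u0: "u \<noteq> 0" by blast
  define v where "v = vcnj u"
  have v0: "v \<noteq> 0" using vcnj_nz[OF u0] v_def by simp
  define \<rho> where "\<rho> = proj v"
  have \<rho>d: "density \<rho>" using proj_density[OF v0] \<rho>_def by simp
  have \<rho>p: "psd \<rho>" using \<rho>d by (simp add: density_def)
  have "\<forall>x\<in>TX. \<exists>e>0. psd (\<sigma> (fg n g x) x - e *\<^sub>R \<rho>)"
  proof
    fix x assume x: "x \<in> TX"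
    have M: "psd (\<sigma> (fg n g x) x)" using psd\<sigma>[OF fgm[OF x] x] .
    obtain w where "\<sigma> (fg n g x) x *v w = v"
      using span_rows_range[OF M] uS[OF x] by (auto simp: S_def v_def)
    then show "\<exists>e>0. psd (\<sigma> (fg n g x) x - e *\<^sub>R \<rho>)"
      using psd_minus_proj[OF M _ v0] \<rho>_def by blast
  qed
  then obtain ee where ee: "\<And>x. x \<in> TX \<Longrightarrow> ee x > 0 \<and> psd (\<sigma> (fg n g x) x - ee x *\<^sub>R \<rho>)"
    by metis
  define \<epsilon> where "\<epsilon> = Min (insert (1/2) (ee ` TX))"
  have \<epsilon>le: "\<epsilon> \<le> 1/2" unfolding \<epsilon>_def by (rule Min_le) (use fTX in auto)
  have \<epsilon>pos: "\<epsilon> > 0" using fTX ee by (simp add: \<epsilon>_def)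
  have \<epsilon>ee: "\<And>x. x \<in> TX \<Longrightarrow> \<epsilon> \<le> ee x" unfolding \<epsilon>_def by (rule Min_le) (use fTX in auto)
  have psdM\<epsilon>: "psd (\<sigma> (fg n g x) x - \<epsilon> *\<^sub>R \<rho>)" if x: "x \<in> TX" for x
  proof -
    have "\<sigma> (fg n g x) x - \<epsilon> *\<^sub>R \<rho> = (\<sigma> (fg n g x) x - ee x *\<^sub>R \<rho>) + (ee x - \<epsilon>) *\<^sub>R \<rho>"
      by (simp add: algebra_simps)
    moreover have "psd ((\<sigma> (fg n g x) x - ee x *\<^sub>R \<rho>) + (ee x - \<epsilon>) *\<^sub>R \<rho>)"
      using psd_add[OF conjunct2[OF ee[OF x]] psd_scaleR[OF \<rho>p]] \<epsilon>ee[OF x] by simp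
    ultimately show ?thesis by metis
  qed
  define p where "p j i ai xi = (if ai = g i xi then 1 else 0 :: real)" for j i ai xi :: nat
  define \<sigma>1 where "\<sigma>1 a x = (\<Prod>i<n. p 0 i (a i) (x i)) *\<^sub>R \<rho>" for a x
  have \<sigma>1eq: "\<sigma>1 a x = (if a = fg n g x then \<rho> else 0)" if a: "a \<in> TA" for a x
  proof -
    have "(\<Prod>i<n. p 0 i (a i) (x i)) = (if \<forall>i<n. a i = g i (x i) then 1 else 0)"
      unfolding p_def by (rule prod_ind)
    moreover have "(a = fg n g x) = (\<forall>i<n. a i = g i (x i))"
      using fg_eq[of a n A g x] a TA_def by auto
    ultimately show ?thesis by (auto simp: \<sigma>1_def)
  qed
  have gA: "\<And>i xi. i < n \<Longrightarrow> xi < X i \<Longrightarrow> g i xi < A i"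
  proof -
    fix i xi assume i: "i < n" and xi: "xi < X i"
    have "g i \<in> PiE {..<X i} (\<lambda>_. {..<A i})" using gS i unfolding strat_def by (simp add: PiE_iff)
    then show "g i xi < A i" using xi by (simp add: PiE_iff)
  qed
  have LHS1: "LHS n A X \<sigma>1"
    unfolding LHS_def
  proof (intro exI[of _ "1::nat"] exI[of _ "\<lambda>_. 1::real"] exI[of _ p] exI[of _ "\<lambda>_. \<rho>"] conjI allI impI ballI)
    show "(\<Sum>j<(1::nat). (1::real)) = 1" by simp
    show "\<And>j. j < 1 \<Longrightarrow> density \<rho>" using \<rho>d by simp
    show "\<And>j i xi ai. j < 1 \<Longrightarrow> i < n \<Longrightarrow> xi < X i \<Longrightarrow> ai < A i \<Longrightarrow> 0 \<le> p j i ai xi"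
      by (simp add: p_def)
    show "(\<Sum>ai<A i. p j i ai xi) = 1" if "j < 1" "i < n" "xi < X i" for j i xi
      using gA[OF that(2,3)] by (simp add: p_def)
    show "\<sigma>1 a x = (\<Sum>j<1. ((1::real) * (\<Prod>i<n. p j i (a i) (x i))) *\<^sub>R \<rho>)" for a x
      by (simp add: \<sigma>1_def)
  qed simp
  define \<sigma>2 where "\<sigma>2 a x = (1 / (1 - \<epsilon>)) *\<^sub>R (\<sigma> a x - \<epsilon> *\<^sub>R \<sigma>1 a x)" for a x
  have \<epsilon>1: "1 - \<epsilon> > 0" using \<epsilon>le by simp
  have decomp: "\<sigma> a x = \<epsilon> *\<^sub>R \<sigma>1 a x + (1 - \<epsilon>) *\<^sub>R \<sigma>2 a x" for a x
    using \<epsilon>1 by (simp add: \<sigma>2_def)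
  have sum\<sigma>1: "(\<Sum>a\<in>TA. \<sigma>1 a x) = \<rho>" if x: "x \<in> TX" for x
  proof -
    have "(\<Sum>a\<in>TA. \<sigma>1 a x) = (\<Sum>a\<in>TA. if a = fg n g x then \<rho> else 0)"
      by (rule sum.cong) (simp_all add: \<sigma>1eq)
    also have "\<dots> = \<rho>" using fTA fgm[OF x] by (simp add: sum.delta)
    finally show ?thesis .
  qed
  define \<rho>2 where "\<rho>2 = (1 / (1 - \<epsilon>)) *\<^sub>R (\<rho>B - \<epsilon> *\<^sub>R \<rho>)"
  have sum2: "(\<Sum>a\<in>TA. \<sigma>2 a x) = \<rho>2" if x: "x \<in> TX" for x
  proof -
    have "(\<Sum>a\<in>TA. \<sigma>2 a x) = (1 / (1 - \<epsilon>)) *\<^sub>R (\<Sum>a\<in>TA. (\<sigma> a x - \<epsilon> *\<^sub>R \<sigma>1 a x))"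
      by (simp add: \<sigma>2_def scaleR_sum_right)
    also have "\<dots> = (1 / (1 - \<epsilon>)) *\<^sub>R ((\<Sum>a\<in>TA. \<sigma> a x) - \<epsilon> *\<^sub>R (\<Sum>a\<in>TA. \<sigma>1 a x))"
      by (simp add: sum_subtractf scaleR_sum_right)
    finally show ?thesis using sum\<sigma>[OF x] sum\<sigma>1[OF x] by (simp add: \<rho>2_def)
  qed
  have marg2: "marginal n A I \<sigma>2 a x = (1 / (1 - \<epsilon>)) *\<^sub>R (marginal n A I \<sigma> a x - \<epsilon> *\<^sub>R marginal n A I \<sigma>1 a x)"
    for I a x
    unfolding marginal_def \<sigma>2_def sum_subtractf scaleR_sum_right[symmetric] by (rule refl)
  have marg1: "marginal n A I \<sigma>1 a x = (if \<forall>i\<in>I. g i (x i) = a i then \<rho> else 0)"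
    if I: "I \<subseteq> {..<n}" and x: "x \<in> TX" for I a x
  proof -
    define B where "B = {b \<in> tuples n A. \<forall>i\<in>I. b i = a i}"
    have fB: "finite B" using fTA by (simp add: B_def TA_def)
    have "marginal n A I \<sigma>1 a x = (\<Sum>b\<in>B. \<sigma>1 b x)" by (simp add: marginal_def B_def)
    also have "\<dots> = (\<Sum>b\<in>B. if b = fg n g x then \<rho> else 0)"
      by (rule sum.cong) (auto simp: \<sigma>1eq B_def TA_def)
    also have "\<dots> = (if fg n g x \<in> B then \<rho> else 0)" using fB by (simp add: sum.delta)
    also have "(fg n g x \<in> B) = (\<forall>i\<in>I. g i (x i) = a i)"
      using fgm[OF x] I by (auto simp: B_def TA_def fg_def)
    finally show ?thesis .
  qed
  have NS2: "no_signaling n A X \<sigma>2"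
    unfolding no_signaling_def
  proof (intro conjI)
    show "\<forall>a\<in>tuples n A. \<forall>x\<in>tuples n X. psd (\<sigma>2 a x)"
    proof (intro ballI)
      fix a x assume a: "a \<in> tuples n A" and x: "x \<in> tuples n X"
      then have aT: "a \<in> TA" and xT: "x \<in> TX" by (simp_all add: TA_def TX_def)
      have e: "\<sigma>2 a x = (1 / (1 - \<epsilon>)) *\<^sub>R (if a = fg n g x then \<sigma> a x - \<epsilon> *\<^sub>R \<rho> else \<sigma> a x)"
        using \<sigma>1eq[OF aT, of x] by (simp add: \<sigma>2_def)
      have c0: "1 / (1 - \<epsilon>) \<ge> 0" using \<epsilon>1 by simp
      show "psd (\<sigma>2 a x)"
      proof (cases "a = fg n g x")
        case True
        then show ?thesis unfolding e using psd_scaleR[OF psdM\<epsilon>[OF xT] c0] by simp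
      next
        case False
        then show ?thesis unfolding e using psd_scaleR[OF psd\<sigma>[OF aT xT] c0] by simp
      qed
    qed
    show "\<exists>\<rho>. density \<rho> \<and> (\<forall>x\<in>tuples n X. (\<Sum>a\<in>tuples n A. \<sigma>2 a x) = \<rho>)"
    proof (intro exI conjI ballI)
      show "(\<Sum>a\<in>tuples n A. \<sigma>2 a x) = \<rho>2" if "x \<in> tuples n X" for x
        using sum2[of x] that by (simp add: TA_def TX_def)
      obtain x0 where x0: "x0 \<in> TX" using tuples_ne[OF Xn] TX_def by blast
      have "\<rho>B = \<sigma> (fg n g x0) x0 + (\<Sum>a\<in>TA - {fg n g x0}. \<sigma> a x0)"
        using sum\<sigma>[OF x0] sum.remove[OF fTA fgm[OF x0], of "\<lambda>a. \<sigma> a x0"] by simp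
      then have "\<rho>B - \<epsilon> *\<^sub>R \<rho> = (\<sigma> (fg n g x0) x0 - \<epsilon> *\<^sub>R \<rho>) + (\<Sum>a\<in>TA - {fg n g x0}. \<sigma> a x0)"
        by (simp add: algebra_simps)
      moreover have "psd ((\<sigma> (fg n g x0) x0 - \<epsilon> *\<^sub>R \<rho>) + (\<Sum>a\<in>TA - {fg n g x0}. \<sigma> a x0))"
        by (rule psd_add[OF psdM\<epsilon>[OF x0] psd_sum]) (use fTA psd\<sigma> x0 in auto)
      ultimately have "psd (\<rho>B - \<epsilon> *\<^sub>R \<rho>)" by metis
      then have p2: "psd \<rho>2" unfolding \<rho>2_def by (rule psd_scaleR) (use \<epsilon>1 in simp)
      have "trace \<rho>2 = of_real (1 / (1 - \<epsilon>)) * (trace \<rho>B - of_real \<epsilon> * trace \<rho>)"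
        by (simp add: \<rho>2_def trace_scaleR trace_sub)
      also have "\<dots> = of_real (1 / (1 - \<epsilon>)) * (1 - of_real \<epsilon>)"
        using \<rho>B \<rho>d by (simp add: density_def)
      also have "\<dots> = 1" using \<epsilon>1
        by (simp add: field_simps)
      finally show "density \<rho>2" using p2 by (simp add: density_def)
    qed
    show "\<forall>I. I \<subseteq> {..<n} \<and> I \<noteq> {} \<and> I \<noteq> {..<n} \<longrightarrow>
        (\<forall>a\<in>tuples n A. \<forall>a'\<in>tuples n A. \<forall>x\<in>tuples n X. \<forall>x'\<in>tuples n X.
           (\<forall>i\<in>I. a i = a' i \<and> x i = x' i) \<longrightarrow>
           marginal n A I \<sigma>2 a x = marginal n A I \<sigma>2 a' x')"
    proof (intro allI impI ballI)
      fix I a a' x x'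
      assume I: "I \<subseteq> {..<n} \<and> I \<noteq> {} \<and> I \<noteq> {..<n}"
        and a: "a \<in> tuples n A" and a': "a' \<in> tuples n A" and x: "x \<in> tuples n X" and x': "x' \<in> tuples n X"
        and ag: "\<forall>i\<in>I. a i = a' i \<and> x i = x' i"
      have m: "marginal n A I \<sigma> a x = marginal n A I \<sigma> a' x'"
        using marg\<sigma>[of I a a' x x'] I a a' x x' ag by (simp add: TA_def TX_def)
      have "(\<forall>i\<in>I. g i (x i) = a i) = (\<forall>i\<in>I. g i (x' i) = a' i)" using ag by auto
      then have m1: "marginal n A I \<sigma>1 a x = marginal n A I \<sigma>1 a' x'"
        using marg1[of I x a] marg1[of I x' a'] I x x' by (simp add: TX_def)
      show "marginal n A I \<sigma>2 a x = marginal n A I \<sigma>2 a' x'"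
        unfolding marg2 m m1 ..
    qed
  qed
  have "\<epsilon> = 0"
  proof -
    have "\<forall>(\<epsilon>::real) \<sigma>1 \<sigma>2. 0 \<le> \<epsilon> \<and> \<epsilon> \<le> 1 \<and> LHS n A X \<sigma>1 \<and> no_signaling n A X \<sigma>2 \<and>
        (\<forall>a\<in>tuples n A. \<forall>x\<in>tuples n X. \<sigma> a x = \<epsilon> *\<^sub>R \<sigma>1 a x + (1 - \<epsilon>) *\<^sub>R \<sigma>2 a x)
        \<longrightarrow> \<epsilon> = 0" using assms(5) unfolding on_edge_def by blast
    then have "0 \<le> \<epsilon> \<and> \<epsilon> \<le> 1 \<and> LHS n A X \<sigma>1 \<and> no_signaling n A X \<sigma>2 \<and>
        (\<forall>a\<in>tuples n A. \<forall>x\<in>tuples n X. \<sigma> a x = \<epsilon> *\<^sub>R \<sigma>1 a x + (1 - \<epsilon>) *\<^sub>R \<sigma>2 a x)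
        \<longrightarrow> \<epsilon> = 0" by blast
    then show ?thesis using \<epsilon>pos \<epsilon>le LHS1 NS2 decomp by simp
  qed
  then show False using \<epsilon>pos by simp
qed


end
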